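(* Let $q,w$ be real-valued functions with $q,w\in L^1[-1,1]$, $w(x)\neq 0$ for a.e. $x\in[-1,1]$, and suppose $xw(x)>0$ for a.e. $x\in[-1,1]$. Let $\varepsilon_1>0$ satisfy $8\|q_-\|_1^2\, m_1(\varepsilon_1)<1$. If $\lambda\in\mathbb{C}\setminus\mathbb{R}$ is an eigenvalue of the problem $-y''+qy=\lambda w y$, $y(-1)=y(1)=0$, then $$|\operatorname{Re}\lambda|\le \frac{4}{\varepsilon_1}\big(\|q_-\|_1+4\|q_-\|_1^2\big),\qquad |\operatorname{Im}\lambda|\le \frac{4}{\varepsilon_1}\|q_-\|_1 .$$
   Context: $\|\cdot\|_p$ denotes the norm of $L^p[-1,1]$ (Lebesgue measure). $q_-(x)=-\min\{0,q(x)\}$. For $\varepsilon>0$, $S_1(\varepsilon)=\{x\in[-1,1]: xw(x)<\varepsilon\}$ and $m_1(\varepsilon)$ is the Lebesgue measure of $S_1(\varepsilon)$. A number $\lambda\in\mathbb{C}$ is an eigenvalue of $-y''+qy=\lambda wy$, $y(-1)=y(1)=0$, if there is a nontrivial function $y$ with $y,y'$ absolutely continuous on $[-1,1]$ satisfying $-y''+qy=\lambda wy$ a.e. on $[-1,1]$ and $y(-1)=y(1)=0$. *)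

theory Defs
  imports "HOL-Analysis.Analysis"
begin

definition abs_cont_on :: "real \<Rightarrow> real \<Rightarrow> (real \<Rightarrow> 'a::real_normed_vector) \<Rightarrow> bool" where
  "abs_cont_on a b f \<longleftrightarrow>
     (\<forall>e>0. \<exists>d>0. \<forall>n::nat. \<forall>s t :: nat \<Rightarrow> real.
        (\<forall>i<n. a \<le> s i \<and> s i \<le> t i \<and> t i \<le> b) \<and>
        (\<forall>i<n. \<forall>j<n. i \<noteq> j \<longrightarrow> t i \<le> s j \<or> t j \<le> s i) \<and>
        (\<Sum>i<n. t i - s i) < d
        \<longrightarrow> (\<Sum>i<n. norm (f (t i) - f (s i))) < e)"

definition neg_part :: "(real \<Rightarrow> real) \<Rightarrow> real \<Rightarrow> real" where
  "neg_part q x = - min 0 (q x)"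

definition L1norm :: "(real \<Rightarrow> real) \<Rightarrow> real" where
  "L1norm f = (LINT x:{-1..1}|lebesgue. \<bar>f x\<bar>)"

definition S1 :: "(real \<Rightarrow> real) \<Rightarrow> real \<Rightarrow> real set" where
  "S1 w eps = {x \<in> {-1..1}. x * w x < eps}"

definition m1 :: "(real \<Rightarrow> real) \<Rightarrow> real \<Rightarrow> real" where
  "m1 w eps = measure lebesgue (S1 w eps)"

text \<open>Here y1 plays the role of y'
 (y has derivative y1 a.e.), and y'' is the a.e. derivative of y1.\<close>
definition is_eigenvalue :: "(real \<Rightarrow> real) \<Rightarrow> (real \<Rightarrow> real) \<Rightarrow> complex \<Rightarrow> bool" where
  "is_eigenvalue q w lam \<longleftrightarrow>
     (\<exists>y y1 :: real \<Rightarrow> complex.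
        abs_cont_on (-1) 1 y \<and> abs_cont_on (-1) 1 y1 \<and>
        (AE x in lebesgue. x \<in> {-1..1} \<longrightarrow>
            (y has_vector_derivative y1 x) (at x within {-1..1})) \<and>
        (AE x in lebesgue. x \<in> {-1..1} \<longrightarrow>
            (\<exists>y2. (y1 has_vector_derivative y2) (at x within {-1..1}) \<and>
                  - y2 + of_real (q x) * y x = lam * of_real (w x) * y x)) \<and>
        y (-1) = 0 \<and> y 1 = 0 \<and> (\<exists>x\<in>{-1..1}. y x \<noteq> 0))"

end

theory Submission
  imports Defs
begin

lemma tagged_interval_facts:
  assumes p: "p tagged_division_of {a..b::real}" and xK: "(x,K) \<in> p"
  shows "K = {Inf K..Sup K} \<and> Inf K \<le> Sup K \<and> a \<le> Inf K \<and> Sup K \<le> b \<and> x \<in> K"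
proof -
  obtain u v where K: "K = cbox u v" using tagged_division_ofD(4)[OF p xK] by blast
  have xin: "x \<in> K" using tagged_division_ofD(2)[OF p xK] .
  have sub: "K \<subseteq> {a..b}" using tagged_division_ofD(3)[OF p xK] .
  have uv: "u \<le> v" using xin K by auto
  have "Inf K = u" "Sup K = v" using uv K by auto
  then show ?thesis using K uv sub xin by auto
qed

lemma negligible_open_small:
  assumes "negligible N" "d > 0"
  obtains T where "open T" "N \<subseteq> T" "T \<in> lmeasurable" "measure lebesgue T < d"
proof -
  have Ns: "N \<in> sets lebesgue" using assms(1) negligible_imp_sets by blast
  obtain T where T: "open T" "N \<subseteq> T" "(T - N) \<in> lmeasurable" "emeasure lebesgue (T - N) < ennreal d"
    using sets_lebesgue_outer_open[OF Ns assms(2)] by blast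
  have TU: "T = (T - N) \<union> N" using T(2) by auto
  have Nl: "N \<in> lmeasurable" using assms(1) negligible_imp_measurable by blast
  have Tl: "T \<in> lmeasurable" using TU T(3) Nl by (metis fmeasurable.Un)
  have "measure lebesgue T \<le> measure lebesgue (T - N) + measure lebesgue N"
    using TU T(3) Nl by (metis measure_Un_le fmeasurable_def mem_Collect_eq)
  moreover have "measure lebesgue N = 0" using assms(1) negligible_imp_measure0 by blast
  moreover have "measure lebesgue (T - N) < d"
  proof -
    have "emeasure lebesgue (T - N) = ennreal (measure lebesgue (T - N))"
      using T(3) by (simp add: emeasure_eq_measure2)
    then have "ennreal (measure lebesgue (T - N)) < ennreal d" using T(4) by simp
    then show ?thesis by (simp add: ennreal_less_iff)
  qed
  ultimately show ?thesis using that T Tl by force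
qed

lemma measure_lebesgue_Icc_real: "u \<le> (v::real) \<Longrightarrow> v - u = measure lebesgue {u..v}" by simp

lemma interval_disj:
  fixes u1 v1 u2 v2 :: real
  assumes "u1 < v1" "u2 < v2" "{u1<..<v1} \<inter> {u2<..<v2} = {}"
  shows "v1 \<le> u2 \<or> v2 \<le> u1"
proof (rule ccontr)
  assume "\<not> ?thesis"
  then have "(max u1 u2 + min v1 v2)/2 \<in> {u1<..<v1} \<inter> {u2<..<v2}"
    using assms(1,2) by (auto simp: max_def min_def)
  then show False using assms(3) by blast
qed

lemma ac_sum_bound:
  fixes f :: "real \<Rightarrow> 'a::real_normed_vector"
  assumes ac: "\<And>(n::nat) (s::nat\<Rightarrow>real) t. (\<forall>i<n. a \<le> s i \<and> s i \<le> t i \<and> t i \<le> b) \<Longrightarrow>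
        (\<forall>i<n. \<forall>j<n. i \<noteq> j \<longrightarrow> t i \<le> s j \<or> t j \<le> s i) \<Longrightarrow>
        (\<Sum>i<n. t i - s i) < d \<Longrightarrow> (\<Sum>i<n. norm (f (t i) - f (s i))) < e"
    and fin: "finite P"
    and bnd: "\<And>K. K \<in> P \<Longrightarrow> a \<le> Inf K \<and> Inf K < Sup K \<and> Sup K \<le> b \<and> K = {Inf K..Sup K}"
    and disj: "\<And>K L. K \<in> P \<Longrightarrow> L \<in> P \<Longrightarrow> K \<noteq> L \<Longrightarrow> interior K \<inter> interior L = {}"
    and len: "(\<Sum>K\<in>P. Sup K - Inf K) < d"
  shows "(\<Sum>K\<in>P. norm (f (Sup K) - f (Inf K))) < e"
proof -
  obtain h where h: "bij_betw h {0..<card P} P" using ex_bij_betw_nat_finite[OF fin] by blast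
  define n where "n = card P"
  have h': "bij_betw h {..<n} P" using h by (simp add: n_def lessThan_atLeast0)
  define s where "s i = Inf (h i)" for i
  define t where "t i = Sup (h i)" for i
  have hin: "\<And>i. i < n \<Longrightarrow> h i \<in> P" using h' bij_betwE by blast
  have c1: "\<forall>i<n. a \<le> s i \<and> s i \<le> t i \<and> t i \<le> b"
    using hin bnd unfolding s_def t_def by (meson less_imp_le)
  have c2: "\<forall>i<n. \<forall>j<n. i \<noteq> j \<longrightarrow> t i \<le> s j \<or> t j \<le> s i"
  proof (intro allI impI)
    fix i j assume ij: "i < n" "j < n" "i \<noteq> j"
    have ne: "h i \<noteq> h j" using h' ij by (metis bij_betw_iff_bijections lessThan_iff)
    have bi: "a \<le> Inf (h i) \<and> Inf (h i) < Sup (h i) \<and> Sup (h i) \<le> b \<and> h i = {Inf (h i)..Sup (h i)}"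
      using bnd hin ij(1) by blast
    have bj: "a \<le> Inf (h j) \<and> Inf (h j) < Sup (h j) \<and> Sup (h j) \<le> b \<and> h j = {Inf (h j)..Sup (h j)}"
      using bnd hin ij(2) by blast
    have "interior (h i) \<inter> interior (h j) = {}" using disj hin ij ne by blast
    then have "{Inf (h i)<..<Sup (h i)} \<inter> {Inf (h j)<..<Sup (h j)} = {}"
      using bi bj by (metis interior_atLeastAtMost_real)
    then show "t i \<le> s j \<or> t j \<le> s i" unfolding s_def t_def
      using interval_disj bi bj by blast
  qed
  have "(\<Sum>i<n. t i - s i) = (\<Sum>K\<in>P. Sup K - Inf K)"
    unfolding s_def t_def using sum.reindex_bij_betw[OF h', of "\<lambda>K. Sup K - Inf K"] by simp
  then have c3: "(\<Sum>i<n. t i - s i) < d" using len by simp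
  have "(\<Sum>i<n. norm (f (t i) - f (s i))) = (\<Sum>K\<in>P. norm (f (Sup K) - f (Inf K)))"
    unfolding s_def t_def using sum.reindex_bij_betw[OF h', of "\<lambda>K. norm (f (Sup K) - f (Inf K))"] by simp
  then show ?thesis using ac[of n s t, OF c1 c2 c3] by simp
qed

lemma ac_ftc:
  fixes f g :: "real \<Rightarrow> 'a::banach"
  assumes ab: "a \<le> b" and ac: "abs_cont_on a b f" and N: "negligible N"
    and der: "\<And>x. x \<in> {a..b} - N \<Longrightarrow> (f has_vector_derivative g x) (at x within {a..b})"
  shows "((\<lambda>x. if x \<in> N then 0 else g x) has_integral (f b - f a)) {a..b}"
  unfolding has_integral_real
proof (intro allI impI)
  fix e :: real assume e: "e > 0"
  let ?G = "\<lambda>x. if x \<in> N then 0 else g x"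
  have e2: "e/2 > 0" using e by simp
  obtain \<delta> where \<delta>: "\<delta> > 0" and acd0: "\<forall>(n::nat) (s::nat\<Rightarrow>real) t. (\<forall>i<n. a \<le> s i \<and> s i \<le> t i \<and> t i \<le> b) \<and>
        (\<forall>i<n. \<forall>j<n. i \<noteq> j \<longrightarrow> t i \<le> s j \<or> t j \<le> s i) \<and>
        (\<Sum>i<n. t i - s i) < \<delta> \<longrightarrow> (\<Sum>i<n. norm (f (t i) - f (s i))) < e/2"
    using ac[unfolded abs_cont_on_def, rule_format, OF e2] by blast
  have acd: "\<And>(n::nat) (s::nat\<Rightarrow>real) t. (\<forall>i<n. a \<le> s i \<and> s i \<le> t i \<and> t i \<le> b) \<Longrightarrow>
        (\<forall>i<n. \<forall>j<n. i \<noteq> j \<longrightarrow> t i \<le> s j \<or> t j \<le> s i) \<Longrightarrow>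
        (\<Sum>i<n. t i - s i) < \<delta> \<Longrightarrow> (\<Sum>i<n. norm (f (t i) - f (s i))) < e/2"
    using acd0 by blast
  obtain T where T: "open T" "N \<subseteq> T" "T \<in> lmeasurable" "measure lebesgue T < \<delta>"
    using negligible_open_small[OF N \<delta>] by blast
  define \<epsilon> where "\<epsilon> = e / (2 * (b - a + 1))"
  have \<epsilon>: "\<epsilon> > 0" using e ab by (simp add: \<epsilon>_def)
  have "\<forall>x. \<exists>d>0. x \<in> {a..b} - N \<longrightarrow>
         (\<forall>y\<in>{a..b}. norm (y-x) < d \<longrightarrow> norm (f y - f x - (y-x) *\<^sub>R g x) \<le> \<epsilon> * norm (y-x))"
    using der[unfolded has_vector_derivative_def has_derivative_within_alt] \<epsilon> by blast
  then obtain d where d: "\<And>x. 0 < d x"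
                 "\<And>x y. \<lbrakk>x \<in> {a..b} - N; y \<in> {a..b}; norm (y-x) < d x\<rbrakk>
                        \<Longrightarrow> norm (f y - f x - (y-x) *\<^sub>R g x) \<le> \<epsilon> * norm (y-x)"
    by metis
  have "\<forall>x. \<exists>r>0. x \<in> N \<longrightarrow> ball x r \<subseteq> T"
    using T(1,2) open_contains_ball by blast
  then obtain r where r: "\<And>x. r x > 0" "\<And>x. x \<in> N \<Longrightarrow> ball x (r x) \<subseteq> T" by metis
  define \<gamma> where "\<gamma> x = (if x \<in> N then ball x (r x) else ball x (d x))" for x
  show "\<exists>\<gamma>. gauge \<gamma> \<and> (\<forall>\<D>. \<D> tagged_division_of {a..b} \<and> \<gamma> fine \<D> \<longrightarrow>
        norm ((\<Sum>(x,k)\<in>\<D>. Henstock_Kurzweil_Integration.content k *\<^sub>R ?G x) - (f b - f a)) < e)"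
  proof (intro exI conjI allI impI)
    show "gauge \<gamma>" unfolding gauge_def \<gamma>_def using r(1) d(1) by auto
  next
    fix p assume "p tagged_division_of {a..b} \<and> \<gamma> fine p"
    then have ptag: "p tagged_division_of {a..b}" and finep: "\<gamma> fine p" by auto
    have finp: "finite p" using ptag by blast
    have ba: "b - a = (\<Sum>(x,K)\<in>p. Sup K - Inf K)" "f b - f a = (\<Sum>(x,K)\<in>p. f(Sup K) - f(Inf K))"
      using additive_tagged_division_1[where f= "\<lambda>x. x"] additive_tagged_division_1[where f= f]
            ab ptag by auto
    define F where "F = (\<lambda>(x,K). Henstock_Kurzweil_Integration.content K *\<^sub>R ?G x - (f (Sup K) - f (Inf K)))"
    define B where "B = (\<lambda>(x::real,K::real set). if x \<in> N \<and> Inf K < Sup K then norm (f (Sup K) - f (Inf K)) else 0)"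
    have hterm: "norm (F (x,K)) \<le> \<epsilon> * (Sup K - Inf K) + B (x,K)" if xK: "(x,K) \<in> p" for x K
    proof -
      have fa: "K = {Inf K..Sup K} \<and> Inf K \<le> Sup K \<and> a \<le> Inf K \<and> Sup K \<le> b \<and> x \<in> K"
        using tagged_interval_facts[OF ptag xK] .
      define u where "u = Inf K"
      define v where "v = Sup K"
      have K: "K = {u..v}" "u \<le> v" "a \<le> u" "v \<le> b" "x \<in> K" using fa u_def v_def by auto
      have cK: "Henstock_Kurzweil_Integration.content K = v - u" using K by simp
      have ball: "K \<subseteq> \<gamma> x" using fineD[OF finep xK] .
      show ?thesis
      proof (cases "x \<in> N")
        case True
        have "norm (F (x,K)) = norm (f v - f u)" unfolding F_def u_def v_def using True by (simp add: norm_minus_commute)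
        also have "\<dots> \<le> B (x,K)"
          using K unfolding B_def u_def v_def by (cases "u < v") (auto simp: True)
        also have "\<dots> \<le> \<epsilon> * (Sup K - Inf K) + B (x,K)"
          using \<epsilon> K(2) unfolding u_def v_def by simp
        finally show ?thesis .
      next
        case False
        have xab: "x \<in> {a..b} - N" using False K by auto
        have ballK: "\<forall>y\<in>K. y \<in> ball x (d x)" using ball False \<gamma>_def by auto
        have "u \<in> K" "v \<in> K" using K by auto
        have "norm ((v - u) *\<^sub>R g x - (f v - f u)) = norm (f u - f x - (u - x) *\<^sub>R g x - (f v - f x - (v - x) *\<^sub>R g x))"
          by (auto simp: algebra_simps)
        also have "\<dots> \<le> norm (f u - f x - (u - x) *\<^sub>R g x) + norm (f v - f x - (v - x) *\<^sub>R g x)"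
          by (rule norm_triangle_ineq4)
        also have "\<dots> \<le> \<epsilon> * norm (u - x) + \<epsilon> * norm (v - x)"
        proof (rule add_mono)
          show "norm (f u - f x - (u - x) *\<^sub>R g x) \<le> \<epsilon> * norm (u - x)"
          proof (rule d(2)[OF xab])
            have "u \<in> ball x (d x)" using ballK \<open>u \<in> K\<close> by blast
            then show "norm (u - x) < d x" by (simp add: dist_norm norm_minus_commute)
            show "u \<in> {a..b}" using \<open>u \<in> K\<close> K by auto
          qed
          show "norm (f v - f x - (v - x) *\<^sub>R g x) \<le> \<epsilon> * norm (v - x)"
          proof (rule d(2)[OF xab])
            have "v \<in> ball x (d x)" using ballK \<open>v \<in> K\<close> by blast
            then show "norm (v - x) < d x" by (simp add: dist_norm norm_minus_commute)
            show "v \<in> {a..b}" using \<open>v \<in> K\<close> K by auto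
          qed
        qed
        also have "\<dots> \<le> \<epsilon> * (v - u)"
          using K \<epsilon> by (auto simp: field_simps)
        finally have "norm ((v - u) *\<^sub>R g x - (f v - f u)) \<le> \<epsilon> * (v - u)" .
        moreover have "B (x,K) \<ge> 0" unfolding B_def by auto
        ultimately show ?thesis unfolding F_def u_def v_def using False cK u_def v_def by simp
      qed
    qed
    have "norm ((\<Sum>(x,k)\<in>p. Henstock_Kurzweil_Integration.content k *\<^sub>R ?G x) - (f b - f a)) = norm (\<Sum>xK\<in>p. F xK)"
      unfolding ba(2) F_def by (simp add: split_def sum_subtractf)
    also have "\<dots> \<le> (\<Sum>xK\<in>p. norm (F xK))" by (rule norm_sum)
    also have "\<dots> \<le> (\<Sum>(x,K)\<in>p. \<epsilon> * (Sup K - Inf K) + B (x,K))"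
      using hterm by (intro sum_mono) auto
    also have "\<dots> = \<epsilon> * (b - a) + (\<Sum>xK\<in>p. B xK)"
      by (simp add: ba(1) split_def sum.distrib sum_distrib_left)
    also have "\<dots> < e/2 + e/2"
    proof (rule add_le_less_mono)
      show "\<epsilon> * (b - a) \<le> e/2" unfolding \<epsilon>_def using e ab by (simp add: field_simps)
      define P where "P = {(x,K) \<in> p. x \<in> N \<and> Inf K < Sup K}"
      have finP: "finite P" by (rule finite_subset[OF _ finp]) (auto simp: P_def)
      have "(\<Sum>xK\<in>p. B xK) = (\<Sum>(x,K)\<in>P. norm (f (Sup K) - f (Inf K)))"
      proof -
        have "(\<Sum>xK\<in>p. B xK) = (\<Sum>xK\<in>P. B xK)"
          unfolding P_def by (rule sum.mono_neutral_right[OF finp]) (auto simp: B_def split: if_splits)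
        also have "\<dots> = (\<Sum>(x,K)\<in>P. norm (f (Sup K) - f (Inf K)))"
          unfolding P_def by (intro sum.cong) (auto simp: B_def)
        finally show ?thesis .
      qed
      have injP: "inj_on snd P"
      proof (rule inj_onI)
        fix xK yL assume xK: "xK \<in> P" and yL: "yL \<in> P" and eq: "snd xK = snd yL"
        show "xK = yL"
        proof (rule ccontr)
          assume ne: "xK \<noteq> yL"
          obtain x K y L where xKd: "xK = (x,K)" and yLd: "yL = (y,L)" by (cases xK, cases yL)
          have "interior K \<inter> interior L = {}"
            using tagged_division_ofD(5)[OF ptag, of x K y L] xK yL ne xKd yLd P_def by auto
          moreover have "K = L" using eq xKd yLd by simp
          moreover have "K = {Inf K..Sup K}" "Inf K < Sup K"
            using tagged_interval_facts[OF ptag, of x K] xK xKd P_def by auto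
          ultimately have "interior K = {}" by simp
          moreover have "interior K = {Inf K<..<Sup K}"
            using \<open>K = {Inf K..Sup K}\<close> by (metis interior_atLeastAtMost_real)
          ultimately show False using \<open>Inf K < Sup K\<close> by simp
        qed
      qed
      have sumP: "(\<Sum>(x,K)\<in>P. norm (f (Sup K) - f (Inf K))) = (\<Sum>K\<in>snd ` P. norm (f (Sup K) - f (Inf K)))"
        using sum.reindex[OF injP, of "\<lambda>K. norm (f (Sup K) - f (Inf K))"] by (simp add: split_def)
      have lenP: "(\<Sum>(x,K)\<in>P. Sup K - Inf K) = (\<Sum>K\<in>snd ` P. Sup K - Inf K)"
        using sum.reindex[OF injP, of "\<lambda>K. Sup K - Inf K"] by (simp add: split_def)
      have divp: "(snd ` p) division_of {a..b}" using division_of_tagged_division[OF ptag] .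
      have Usnd: "\<Union>(snd ` p) = {a..b}" using division_ofD(6)[OF divp] .
      have divP: "(snd ` P) division_of \<Union>(snd ` P)"
        by (rule division_of_subset[of "snd ` p"]) (use divp Usnd P_def in auto)
      have "(\<Sum>K\<in>snd ` P. Sup K - Inf K) = (\<Sum>K\<in>snd ` P. measure lebesgue K)"
      proof (intro sum.cong refl)
        fix K assume "K \<in> snd ` P"
        then obtain x where "(x,K) \<in> p" using P_def by auto
        then have "K = {Inf K..Sup K}" "Inf K \<le> Sup K" using tagged_interval_facts[OF ptag] by blast+
        then show "Sup K - Inf K = measure lebesgue K" by (metis measure_lebesgue_Icc_real)
      qed
      also have "\<dots> = measure lebesgue (\<Union>(snd ` P))" using content_division[OF divP] .
      also have "\<dots> \<le> measure lebesgue T"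
      proof (rule measure_mono_fmeasurable)
        show "\<Union>(snd ` P) \<subseteq> T"
        proof
          fix z assume "z \<in> \<Union>(snd ` P)"
          then obtain x K where xK: "(x,K) \<in> P" "z \<in> K" by auto
          have "K \<subseteq> \<gamma> x" using fineD[OF finep] xK P_def by blast
          then show "z \<in> T" using r(2) xK P_def \<gamma>_def by auto
        qed
        show "\<Union>(snd ` P) \<in> sets lebesgue" using lmeasurable_division[OF divP] by auto
        show "T \<in> fmeasurable lebesgue" using T(3) by simp
      qed
      finally have lenlt: "(\<Sum>K\<in>snd ` P. Sup K - Inf K) < \<delta>" using T(4) by linarith
      have "(\<Sum>K\<in>snd ` P. norm (f (Sup K) - f (Inf K))) < e/2"
      proof (rule ac_sum_bound[where a=a and b=b and d=\<delta>, OF acd])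
        show "finite (snd ` P)" using finP by simp
        show "a \<le> Inf K \<and> Inf K < Sup K \<and> Sup K \<le> b \<and> K = {Inf K..Sup K}" if KP: "K \<in> snd ` P" for K
        proof -
          obtain x where "(x,K) \<in> p" "Inf K < Sup K" using KP by (auto simp: P_def)
          then show ?thesis using tagged_interval_facts[OF ptag, of x K] by auto
        qed
        show "interior K \<inter> interior L = {}" if KL: "K \<in> snd ` P" "L \<in> snd ` P" "K \<noteq> L" for K L
        proof -
          obtain x where x: "(x,K) \<in> p" using KL(1) by (auto simp: P_def)
          obtain y where y: "(y,L) \<in> p" using KL(2) by (auto simp: P_def)
          have "(x,K) \<noteq> (y,L)" using KL(3) by simp
          then show ?thesis using tagged_division_ofD(5)[OF ptag x y] by blast
        qed
        show "(\<Sum>K\<in>snd ` P. Sup K - Inf K) < \<delta>" using lenlt .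
      qed
      then show "(\<Sum>xK\<in>p. B xK) < e/2" using \<open>(\<Sum>xK\<in>p. B xK) = _\<close> sumP by simp
    qed
    also have "\<dots> = e" by simp
    finally show "norm ((\<Sum>(x,k)\<in>p. Henstock_Kurzweil_Integration.content k *\<^sub>R ?G x) - (f b - f a)) < e" .
  qed
qed

lemma ac_continuous:
  fixes f :: "real \<Rightarrow> 'a::real_normed_vector"
  assumes ac: "abs_cont_on a b f"
  shows "continuous_on {a..b} f"
  unfolding continuous_on_iff
proof (intro ballI allI impI)
  fix x e assume x: "x \<in> {a..b}" and e: "(e::real) > 0"
  obtain d where d: "d > 0" and H: "\<forall>(n::nat) (s::nat\<Rightarrow>real) t. (\<forall>i<n. a \<le> s i \<and> s i \<le> t i \<and> t i \<le> b) \<and>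
        (\<forall>i<n. \<forall>j<n. i \<noteq> j \<longrightarrow> t i \<le> s j \<or> t j \<le> s i) \<and>
        (\<Sum>i<n. t i - s i) < d \<longrightarrow> (\<Sum>i<n. norm (f (t i) - f (s i))) < e"
    using ac[unfolded abs_cont_on_def, rule_format, OF e] by blast
  show "\<exists>d>0. \<forall>x'\<in>{a..b}. dist x' x < d \<longrightarrow> dist (f x') (f x) < e"
  proof (intro exI conjI ballI impI)
    show "d > 0" by fact
    fix y assume y: "y \<in> {a..b}" and dy: "dist y x < d"
    define s where "s = (\<lambda>i::nat. min x y)"
    define t where "t = (\<lambda>i::nat. max x y)"
    have dd: "min x y \<le> max x y \<and> max x y - min x y < d" using dy by (auto simp: dist_real_def)
    have "(\<Sum>i<(1::nat). norm (f (t i) - f (s i))) < e"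
      using H[rule_format, of 1 s t] x y dd unfolding s_def t_def by auto
    then have "norm (f (max x y) - f (min x y)) < e" by (simp add: s_def t_def)
    then show "dist (f y) (f x) < e"
      by (cases "x \<le> y") (auto simp: dist_norm norm_minus_commute max_def min_def)
  qed
qed

lemma ac_sub:
  assumes "abs_cont_on a b f" "a \<le> c" "d \<le> b"
  shows "abs_cont_on c d f"
  unfolding abs_cont_on_def
proof (intro allI impI)
  fix e :: real assume e: "e > 0"
  obtain \<delta> where d: "\<delta> > 0" and H: "\<forall>(n::nat) (s::nat\<Rightarrow>real) t. (\<forall>i<n. a \<le> s i \<and> s i \<le> t i \<and> t i \<le> b) \<and>
        (\<forall>i<n. \<forall>j<n. i \<noteq> j \<longrightarrow> t i \<le> s j \<or> t j \<le> s i) \<and>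
        (\<Sum>i<n. t i - s i) < \<delta> \<longrightarrow> (\<Sum>i<n. norm (f (t i) - f (s i))) < e"
    using assms(1)[unfolded abs_cont_on_def, rule_format, OF e] by blast
  show "\<exists>\<delta>>0. \<forall>(n::nat) s t. (\<forall>i<n. c \<le> s i \<and> s i \<le> t i \<and> t i \<le> d) \<and>
        (\<forall>i<n. \<forall>j<n. i \<noteq> j \<longrightarrow> t i \<le> s j \<or> t j \<le> s i) \<and>
        (\<Sum>i<n. t i - s i) < \<delta> \<longrightarrow> (\<Sum>i<n. norm (f (t i) - f (s i))) < e"
  proof (intro exI conjI allI impI)
    show "\<delta> > 0" by fact
    fix n :: nat and s t :: "nat \<Rightarrow> real"
    assume A: "(\<forall>i<n. c \<le> s i \<and> s i \<le> t i \<and> t i \<le> d) \<and>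
        (\<forall>i<n. \<forall>j<n. i \<noteq> j \<longrightarrow> t i \<le> s j \<or> t j \<le> s i) \<and> (\<Sum>i<n. t i - s i) < \<delta>"
    have "\<forall>i<n. a \<le> s i \<and> s i \<le> t i \<and> t i \<le> b" using A assms(2,3) by force
    then show "(\<Sum>i<n. norm (f (t i) - f (s i))) < e" using H A by blast
  qed
qed

lemma ac_id: "abs_cont_on a b (\<lambda>x. complex_of_real x)"
  unfolding abs_cont_on_def
proof (intro allI impI exI conjI)
  fix e :: real assume e: "e > 0"
  show "e > 0" by fact
  fix n :: nat and s t :: "nat \<Rightarrow> real"
  assume "(\<forall>i<n. a \<le> s i \<and> s i \<le> t i \<and> t i \<le> b) \<and>
        (\<forall>i<n. \<forall>j<n. i \<noteq> j \<longrightarrow> t i \<le> s j \<or> t j \<le> s i) \<and> (\<Sum>i<n. t i - s i) < e"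
  then have h: "\<forall>i<n. s i \<le> t i" "(\<Sum>i<n. t i - s i) < e" by auto
  have "(\<Sum>i<n. norm (complex_of_real (t i) - complex_of_real (s i))) = (\<Sum>i<n. t i - s i)"
  proof (intro sum.cong refl)
    fix i assume "i \<in> {..<n}"
    then have "s i \<le> t i" using h by auto
    then show "norm (complex_of_real (t i) - complex_of_real (s i)) = t i - s i"
      by (metis abs_of_nonneg diff_ge_0_iff_ge norm_of_real of_real_diff)
  qed
  then show "(\<Sum>i<n. norm (complex_of_real (t i) - complex_of_real (s i))) < e" using h by simp
qed

lemma ac_cnj:
  assumes "abs_cont_on a b f"
  shows "abs_cont_on a b (\<lambda>x. cnj (f x))"
proof -
  have "\<And>u v. norm (cnj (f u) - cnj (f v)) = norm (f u - f v)"
    by (metis complex_cnj_diff complex_mod_cnj)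
  then show ?thesis using assms unfolding abs_cont_on_def by simp
qed

lemma ac_mult:
  fixes f g :: "real \<Rightarrow> complex"
  assumes af: "abs_cont_on a b f" and ag: "abs_cont_on a b g"
  shows "abs_cont_on a b (\<lambda>x. f x * g x)"
  unfolding abs_cont_on_def
proof (intro allI impI)
  fix e :: real assume e: "e > 0"
  have cf: "compact (f ` {a..b})" using ac_continuous[OF af] compact_continuous_image by blast
  have cg: "compact (g ` {a..b})" using ac_continuous[OF ag] compact_continuous_image by blast
  obtain Mf where Mf: "Mf > 0" "\<And>x. x \<in> {a..b} \<Longrightarrow> norm (f x) \<le> Mf"
    using compact_imp_bounded[OF cf] unfolding bounded_pos by auto
  obtain Mg where Mg: "Mg > 0" "\<And>x. x \<in> {a..b} \<Longrightarrow> norm (g x) \<le> Mg"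
    using compact_imp_bounded[OF cg] unfolding bounded_pos by auto
  have e1: "e / (2 * Mg) > 0" using e Mg by simp
  have e2: "e / (2 * Mf) > 0" using e Mf by simp
  obtain d1 where d1: "d1 > 0" and H1: "\<forall>(n::nat) (s::nat\<Rightarrow>real) t. (\<forall>i<n. a \<le> s i \<and> s i \<le> t i \<and> t i \<le> b) \<and>
        (\<forall>i<n. \<forall>j<n. i \<noteq> j \<longrightarrow> t i \<le> s j \<or> t j \<le> s i) \<and>
        (\<Sum>i<n. t i - s i) < d1 \<longrightarrow> (\<Sum>i<n. norm (f (t i) - f (s i))) < e / (2 * Mg)"
    using af[unfolded abs_cont_on_def, rule_format, OF e1] by blast
  obtain d2 where d2: "d2 > 0" and H2: "\<forall>(n::nat) (s::nat\<Rightarrow>real) t. (\<forall>i<n. a \<le> s i \<and> s i \<le> t i \<and> t i \<le> b) \<and>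
        (\<forall>i<n. \<forall>j<n. i \<noteq> j \<longrightarrow> t i \<le> s j \<or> t j \<le> s i) \<and>
        (\<Sum>i<n. t i - s i) < d2 \<longrightarrow> (\<Sum>i<n. norm (g (t i) - g (s i))) < e / (2 * Mf)"
    using ag[unfolded abs_cont_on_def, rule_format, OF e2] by blast
  show "\<exists>d>0. \<forall>(n::nat) s t. (\<forall>i<n. a \<le> s i \<and> s i \<le> t i \<and> t i \<le> b) \<and>
        (\<forall>i<n. \<forall>j<n. i \<noteq> j \<longrightarrow> t i \<le> s j \<or> t j \<le> s i) \<and>
        (\<Sum>i<n. t i - s i) < d \<longrightarrow> (\<Sum>i<n. norm (f (t i) * g (t i) - f (s i) * g (s i))) < e"
  proof (intro exI conjI allI impI)
    show "min d1 d2 > 0" using d1 d2 by simp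
    fix n :: nat and s t :: "nat \<Rightarrow> real"
    assume A: "(\<forall>i<n. a \<le> s i \<and> s i \<le> t i \<and> t i \<le> b) \<and>
        (\<forall>i<n. \<forall>j<n. i \<noteq> j \<longrightarrow> t i \<le> s j \<or> t j \<le> s i) \<and> (\<Sum>i<n. t i - s i) < min d1 d2"
    have S1: "(\<Sum>i<n. norm (f (t i) - f (s i))) < e / (2 * Mg)" using H1 A by auto
    have S2: "(\<Sum>i<n. norm (g (t i) - g (s i))) < e / (2 * Mf)" using H2 A by auto
    have "(\<Sum>i<n. norm (f (t i) * g (t i) - f (s i) * g (s i)))
        \<le> (\<Sum>i<n. Mg * norm (f (t i) - f (s i)) + Mf * norm (g (t i) - g (s i)))"
    proof (rule sum_mono)
      fix i assume "i \<in> {..<n}"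
      then have st: "s i \<in> {a..b}" "t i \<in> {a..b}" using A by auto
      have "f (t i) * g (t i) - f (s i) * g (s i) = (f (t i) - f (s i)) * g (t i) + f (s i) * (g (t i) - g (s i))"
        by (simp add: algebra_simps)
      then have "norm (f (t i) * g (t i) - f (s i) * g (s i)) \<le> norm (f (t i) - f (s i)) * norm (g (t i)) + norm (f (s i)) * norm (g (t i) - g (s i))"
        by (metis norm_mult norm_triangle_ineq)
      also have "\<dots> \<le> norm (f (t i) - f (s i)) * Mg + Mf * norm (g (t i) - g (s i))"
        by (intro add_mono mult_left_mono mult_right_mono Mg(2) Mf(2) st) auto
      finally show "norm (f (t i) * g (t i) - f (s i) * g (s i)) \<le> Mg * norm (f (t i) - f (s i)) + Mf * norm (g (t i) - g (s i))"
        by (simp add: mult.commute)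
    qed
    also have "\<dots> = Mg * (\<Sum>i<n. norm (f (t i) - f (s i))) + Mf * (\<Sum>i<n. norm (g (t i) - g (s i)))"
      by (simp add: sum.distrib sum_distrib_left)
    also have "\<dots> < Mg * (e / (2 * Mg)) + Mf * (e / (2 * Mf))"
      using S1 S2 Mf Mg by (intro add_strict_mono mult_strict_left_mono) auto
    also have "\<dots> = e" using Mf Mg by simp
    finally show "(\<Sum>i<n. norm (f (t i) * g (t i) - f (s i) * g (s i))) < e" .
  qed
qed

lemma ac_ftc_spike:
  fixes f g :: "real \<Rightarrow> 'a::banach"
  assumes ab: "a \<le> b" and ac: "abs_cont_on a b f" and N: "negligible N"
    and der: "\<And>x. x \<in> {a..b} - N \<Longrightarrow> (f has_vector_derivative g x) (at x within {a..b})"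
  shows "(g has_integral (f b - f a)) {a..b}"
  by (rule has_integral_spike[OF N _ ac_ftc[OF ab ac N der]]) auto

lemma final_arith:
  fixes Y D P Qn Q A Rq Xq Xd Cr Ci m \<epsilon> ci cr :: real
  assumes h1: "Rq + D = 0" and h2: "Cr + Xq + Xd - cr * A = 0" and h3: "Ci - ci * A = 0"
   and P0: "P > 0" and D0: "D \<ge> 0" and hRq: "-Rq \<le> Qn" and hQn: "Qn \<le> Q * P" and Q0: "Q \<ge> 0"
   and hXq: "\<bar>Xq\<bar> \<le> Rq + 2*Qn" and hXd: "\<bar>Xd\<bar> \<le> D" and hCr: "\<bar>Cr\<bar> \<le> P" and hCi: "\<bar>Ci\<bar> \<le> P"
   and amgm: "\<And>t. t > 0 \<Longrightarrow> P \<le> (t*D + Y/t)/2" and Y0: "Y \<ge> 0"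
   and hA: "A \<ge> \<epsilon>*Y - \<epsilon>*P*m" and e0: "\<epsilon> > 0" and m0: "m \<ge> 0" and m2: "m \<le> 2"
   and hm: "8*Q^2*m < 1"
  shows "\<bar>cr\<bar> \<le> 4/\<epsilon> * (Q + 4*Q^2) \<and> \<bar>ci\<bar> \<le> 4/\<epsilon> * Q"
proof -
  have DQP: "D \<le> Q * P" using h1 hRq hQn by linarith
  have Qpos: "Q > 0"
  proof (rule ccontr)
    assume "\<not> Q > 0"
    then have "Q = 0" using Q0 by simp
    then have "D = 0" using DQP D0 by simp
    define t where "t = (Y + 1) / P"
    have t0: "t > 0" using P0 Y0 by (simp add: t_def)
    have "P \<le> (Y / t) / 2" using amgm[OF t0] \<open>D = 0\<close> by simp
    also have "\<dots> = Y * P / (2 * (Y + 1))" using P0 Y0 by (simp add: t_def field_simps)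
    also have "\<dots> < P" using P0 Y0 by (simp add: field_simps) (smt (verit) mult_nonneg_nonneg)
    finally show False by simp
  qed
  have a1: "P \<le> ((1/Q)*D + Y/(1/Q))/2" using amgm[of "1/Q"] Qpos by simp
  have a2: "((1/Q)*D + Y/(1/Q))/2 = (D/Q + Q*Y)/2" by simp
  have a3: "D/Q \<le> P" using DQP Qpos by (simp add: divide_le_eq mult.commute)
  have a4: "P \<le> (D/Q + Q*Y)/2" using a1 a2 by (simp add: mult.commute)
  have gen: "P \<le> z" if "P \<le> (d + z)/2" "d \<le> P" for d z :: real using that by (simp add: field_simps)
  have PQY: "P \<le> Q * Y" using gen[OF a4 a3] .
  have Ypos: "Y > 0"
  proof (rule ccontr)
    assume "\<not> Y > 0"
    then have "Y = 0" using Y0 by simp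
    then show False using PQY P0 by simp
  qed
  have Qm2: "2*(Q*m) \<le> 1"
  proof (rule ccontr)
    assume "\<not> 2*(Q*m) \<le> 1"
    then have a: "2*(Q*m) > 1" by simp
    have "Q*m \<le> Q*2" using m2 Qpos by (intro mult_left_mono) auto
    then have b: "4*Q > 1" using a by linarith
    have "8*Q^2*m = (4*Q)*(2*(Q*m))" by (simp add: power2_eq_square algebra_simps)
    also have "\<dots> > 1*1" using a b by (intro mult_strict_mono) auto
    finally show False using hm by simp
  qed
  have Qm: "Q * m \<le> 1/2" using Qm2 by simp
  have "\<epsilon>*P*m \<le> \<epsilon>*(Q*Y)*m" using PQY e0 m0 by (simp add: mult_right_mono)
  also have "\<dots> = \<epsilon>*Y*(Q*m)" by simp
  also have "\<dots> \<le> \<epsilon>*Y*(1/2)" using Qm e0 Ypos by (intro mult_left_mono) auto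
  finally have "A \<ge> \<epsilon>*Y/2" using hA by simp
  then have AeY: "A \<ge> \<epsilon>*Y/2" .
  have eY: "\<epsilon>*Y > 0" using e0 Ypos by simp
  have Apos: "A > 0" using AeY eY by linarith
  have Ainv: "1/A \<le> 2/(\<epsilon>*Y)"
  proof -
    have "1/A \<le> 1/(\<epsilon>*Y/2)" using AeY eY by (intro divide_left_mono) auto
    then show ?thesis by simp
  qed
  have "\<bar>ci\<bar> * A = \<bar>Ci\<bar>" using h3 Apos by (simp add: abs_mult)
  then have "\<bar>ci\<bar> * A \<le> Q * Y" using hCi PQY by simp
  then have "\<bar>ci\<bar> \<le> Q * Y / A" using Apos by (simp add: field_simps)
  also have "\<dots> = (Q * Y) * (1/A)" by simp
  also have "\<dots> \<le> (Q*Y) * (2/(\<epsilon>*Y))" using Ainv Qpos Ypos by (intro mult_left_mono) auto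
  also have "\<dots> = 2/\<epsilon> * Q" using Ypos by simp
  also have "\<dots> \<le> 4/\<epsilon> * Q" using Qpos e0 by (simp add: divide_right_mono)
  finally have C1: "\<bar>ci\<bar> \<le> 4/\<epsilon> * Q" .
  have "\<bar>cr\<bar> * A = \<bar>Cr + Xq + Xd\<bar>" using h2 Apos by (simp add: abs_mult)
  also have "\<dots> \<le> P + (Rq + 2*Qn) + D" using hCr hXq hXd by linarith
  also have "\<dots> = P + 2*Qn" using h1 by simp
  also have "\<dots> \<le> Q*Y + 2*(Q*(Q*Y))"
    using hQn PQY Qpos by (smt (verit) mult_left_mono)
  finally have "\<bar>cr\<bar> * A \<le> (Q + 2*Q^2) * Y" by (simp add: power2_eq_square algebra_simps)
  then have "\<bar>cr\<bar> \<le> (Q + 2*Q^2) * Y / A" using Apos by (simp add: field_simps)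
  also have "\<dots> = ((Q + 2*Q^2) * Y) * (1/A)" by simp
  also have "\<dots> \<le> ((Q + 2*Q^2) * Y) * (2/(\<epsilon>*Y))" using Ainv Qpos Ypos by (intro mult_left_mono) auto
  also have "\<dots> = 2/\<epsilon> * (Q + 2*Q^2)" using Ypos by simp
  also have "\<dots> \<le> 4/\<epsilon> * (Q + 4*Q^2)" using Qpos e0
    by (intro mult_mono) (auto simp: divide_right_mono)
  finally show ?thesis using C1 by simp
qed

lemma absint_cont_mult:
  fixes h g :: "real \<Rightarrow> real"
  assumes "continuous_on {a..b} h" "g absolutely_integrable_on {a..b}"
  shows "(\<lambda>x. h x * g x) absolutely_integrable_on {a..b}"
proof (rule absolutely_integrable_bounded_measurable_product_real)
  show "h \<in> borel_measurable (lebesgue_on {a..b})"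
    using continuous_imp_measurable_on_sets_lebesgue[OF assms(1)] by simp
  show "bounded (h ` {a..b})" using compact_continuous_image[OF assms(1)] compact_imp_bounded by blast
qed (use assms in auto)

lemma absint_cont:
  fixes h :: "real \<Rightarrow> real"
  assumes "continuous_on {a..b} h"
  shows "h absolutely_integrable_on {a..b}"
  using absolutely_integrable_continuous_real[OF assms] .

lemma absint_int: "(f::real\<Rightarrow>real) absolutely_integrable_on S \<Longrightarrow> f integrable_on S"
  using set_lebesgue_integral_eq_integral(1) by blast

lemma integral_lin3:
  fixes f g h :: "real \<Rightarrow> real"
  assumes "f integrable_on S" "g integrable_on S" "h integrable_on S"
  shows "integral S (\<lambda>x. f x + g x - a * h x) = integral S f + integral S g - a * integral S h"
proof -
  have ha: "(\<lambda>x. a * h x) integrable_on S" using integrable_cmul[OF assms(3), of a] by simp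
  have "integral S (\<lambda>x. f x + g x - a * h x) = integral S (\<lambda>x. f x + g x) - integral S (\<lambda>x. a * h x)"
    by (rule integral_diff[OF integrable_add[OF assms(1,2)] ha])
  also have "\<dots> = integral S f + integral S g - a * integral S h"
    using integral_add[OF assms(1,2)] integral_mult[OF assms(3), of a] by simp
  finally show ?thesis .
qed

lemma integral_lin4:
  fixes f g h k :: "real \<Rightarrow> real"
  assumes "f integrable_on S" "g integrable_on S" "h integrable_on S" "k integrable_on S"
  shows "integral S (\<lambda>x. f x + g x - a * h x + k x) = integral S f + integral S g - a * integral S h + integral S k"
proof -
  have ha: "(\<lambda>x. a * h x) integrable_on S" using integrable_cmul[OF assms(3), of a] by simp
  have i1: "(\<lambda>x. f x + g x - a * h x) integrable_on S"
    by (rule integrable_diff[OF integrable_add[OF assms(1,2)] ha])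
  have "integral S (\<lambda>x. f x + g x - a * h x + k x) = integral S (\<lambda>x. f x + g x - a * h x) + integral S k"
    by (rule integral_add[OF i1 assms(4)])
  also have "integral S (\<lambda>x. f x + g x - a * h x) = integral S f + integral S g - a * integral S h"
    by (rule integral_lin3[OF assms(1-3)])
  finally show ?thesis .
qed

lemma integral_lin2:
  fixes h k :: "real \<Rightarrow> real"
  assumes "h integrable_on S" "k integrable_on S"
  shows "integral S (\<lambda>x. - a * h x + k x) = - a * integral S h + integral S k"
proof -
  have ha: "(\<lambda>x. - a * h x) integrable_on S" using integrable_cmul[OF assms(1), of "-a"] by simp
  have "integral S (\<lambda>x. - a * h x + k x) = integral S (\<lambda>x. - a * h x) + integral S k"
    by (rule integral_add[OF ha assms(2)])
  then show ?thesis using integral_mult[OF assms(1), of "-a"] by simp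
qed

lemma integral_abs_le:
  fixes f g :: "real \<Rightarrow> real"
  assumes "f integrable_on S" "g integrable_on S" "\<And>x. x \<in> S \<Longrightarrow> \<bar>f x\<bar> \<le> g x"
  shows "\<bar>integral S f\<bar> \<le> integral S g"
proof -
  have "integral S f \<le> integral S g" using assms by (intro integral_le) (auto simp: abs_le_iff)
  moreover have "integral S (\<lambda>x. - g x) \<le> integral S f"
  proof (rule integral_le)
    show "(\<lambda>x. - g x) integrable_on S" using assms(2) by (rule integrable_neg)
    show "f integrable_on S" by fact
    fix x assume "x \<in> S"
    then have "\<bar>f x\<bar> \<le> g x" by (rule assms(3))
    then show "- g x \<le> f x" by linarith
  qed
  ultimately show ?thesis by (simp add: abs_le_iff)
qed

theorem theorem1p2:
  fixes q w :: "real \<Rightarrow> real" and \<epsilon>1 :: real and lam :: complex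
  assumes "set_integrable lebesgue {-1..1} q"
    and "set_integrable lebesgue {-1..1} w"
    and "AE x in lebesgue. x \<in> {-1..1} \<longrightarrow> w x \<noteq> 0"
    and "AE x in lebesgue. x \<in> {-1..1} \<longrightarrow> x * w x > 0"
    and "\<epsilon>1 > 0"
    and "8 * (L1norm (neg_part q))\<^sup>2 * m1 w \<epsilon>1 < 1"
    and "Im lam \<noteq> 0"
    and "is_eigenvalue q w lam"
  shows "\<bar>Re lam\<bar> \<le> 4 / \<epsilon>1 * (L1norm (neg_part q) + 4 * (L1norm (neg_part q))\<^sup>2) \<and>
           \<bar>Im lam\<bar> \<le> 4 / \<epsilon>1 * L1norm (neg_part q)"
proof -
  define I where "I = {-1..1::real}"
  define c where "c = lam"
  obtain y y1 :: "real \<Rightarrow> complex" where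
    ac_y: "abs_cont_on (-1) 1 y" and ac_y1: "abs_cont_on (-1) 1 y1" and
    dy: "AE x in lebesgue. x \<in> {-1..1} \<longrightarrow> (y has_vector_derivative y1 x) (at x within {-1..1})" and
    dy1: "AE x in lebesgue. x \<in> {-1..1} \<longrightarrow>
            (\<exists>y2. (y1 has_vector_derivative y2) (at x within {-1..1}) \<and>
                  - y2 + of_real (q x) * y x = lam * of_real (w x) * y x)" and
    ym1: "y (-1) = 0" and yp1: "y 1 = 0" and ex0: "\<exists>x\<in>{-1..1}. y x \<noteq> 0"
    using assms(8) unfolding is_eigenvalue_def by blast
  obtain x0 where x0: "x0 \<in> I" "y x0 \<noteq> 0" using ex0 I_def by blast
  have cy: "continuous_on I y" using ac_continuous[OF ac_y] I_def by simp
  have cy1: "continuous_on I y1" using ac_continuous[OF ac_y1] I_def by simp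
  define g where "g x = (of_real (q x) - c * of_real (w x)) * y x" for x
  have "AE x in lebesgue. x \<in> I \<longrightarrow> (y has_vector_derivative y1 x) (at x within I) \<and>
          (y1 has_vector_derivative g x) (at x within I) \<and> x * w x > 0"
    using dy dy1 assms(4)
  proof eventually_elim
    case (elim x)
    show ?case
    proof
      assume xI: "x \<in> I"
      obtain y2 where y2: "(y1 has_vector_derivative y2) (at x within {-1..1})"
          "- y2 + of_real (q x) * y x = lam * of_real (w x) * y x"
        using elim(2) xI I_def by blast
      have "y2 = g x" using y2(2) unfolding g_def c_def by (simp add: algebra_simps eq_neg_iff_add_eq_0)
      then show "(y has_vector_derivative y1 x) (at x within I) \<and>
          (y1 has_vector_derivative g x) (at x within I) \<and> x * w x > 0"
        using elim(1,3) y2(1) xI I_def by auto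
    qed
  qed
  then obtain N where N: "negligible N" and
    HN: "\<And>x. x \<in> I - N \<Longrightarrow> (y has_vector_derivative y1 x) (at x within I) \<and>
          (y1 has_vector_derivative g x) (at x within I) \<and> x * w x > 0"
    unfolding eventually_ae_filter_negligible by blast
  have dY: "\<And>x. x \<in> I - N \<Longrightarrow> (y has_vector_derivative y1 x) (at x within I)" using HN by blast
  have dY1: "\<And>x. x \<in> I - N \<Longrightarrow> (y1 has_vector_derivative g x) (at x within I)" using HN by blast
  have xw: "\<And>x. x \<in> I - N \<Longrightarrow> x * w x > 0" using HN by blast
  define ny where "ny x = (cmod (y x))^2" for x
  define nd where "nd x = (cmod (y1 x))^2" for x
  have cny: "continuous_on I ny" unfolding ny_def by (intro continuous_intros cy)
  have cnd: "continuous_on I nd" unfolding nd_def by (intro continuous_intros cy1)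
  have qI: "q absolutely_integrable_on I" using assms(1) I_def by simp
  have wI: "w absolutely_integrable_on I" using assms(2) I_def by simp
  have Iab: "I = {-1..1}" by (simp add: I_def)
  have ai_nyq: "(\<lambda>x. ny x * q x) absolutely_integrable_on I" using absint_cont_mult[OF cny[unfolded Iab] qI[unfolded Iab]] Iab by simp
  have ai_nyw: "(\<lambda>x. ny x * w x) absolutely_integrable_on I" using absint_cont_mult[OF cny[unfolded Iab] wI[unfolded Iab]] Iab by simp
  have ai_ny: "ny absolutely_integrable_on I" using absint_cont[OF cny[unfolded Iab]] Iab by simp
  have ai_nd: "nd absolutely_integrable_on I" using absint_cont[OF cnd[unfolded Iab]] Iab by simp
  define Y0 where "Y0 x = y1 x * cnj (y x)" for x
  define D0 where "D0 x = y1 x * cnj (y1 x) + g x * cnj (y x)" for x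
  have ac0: "abs_cont_on (-1) 1 Y0" unfolding Y0_def by (rule ac_mult[OF ac_y1 ac_cnj[OF ac_y]])
  have d0: "(Y0 has_vector_derivative D0 x) (at x within {-1..1})" if "x \<in> {-1..1} - N" for x
  proof -
    have "x \<in> I - N" using that I_def by simp
    then show ?thesis unfolding Y0_def D0_def
      using has_vector_derivative_mult[OF dY1 has_vector_derivative_cnj[OF dY]] I_def by simp
  qed
  have int0: "(D0 has_integral 0) I"
    using ac_ftc_spike[of "-1" 1 Y0 N D0, OF _ ac0 N d0] ym1 yp1 by (simp add: Y0_def I_def)
  have D0eq: "D0 x = of_real (nd x + ny x * q x) - c * of_real (ny x * w x)" for x
  proof -
    have "D0 x = y1 x * cnj (y1 x) + (of_real (q x) - c * of_real (w x)) * (y x * cnj (y x))"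
      by (simp add: D0_def g_def mult.assoc)
    also have "\<dots> = of_real (nd x) + (of_real (q x) - c * of_real (w x)) * of_real (ny x)"
      by (simp only: nd_def ny_def complex_norm_square)
    finally show ?thesis by (simp add: algebra_simps)
  qed
  have int0re: "((\<lambda>x. nd x + ny x * q x - Re c * (ny x * w x)) has_integral 0) I"
    using has_integral_linear[OF int0 bounded_linear_Re] by (simp add: o_def D0eq)
  have int0im: "((\<lambda>x. - Im c * (ny x * w x)) has_integral 0) I"
    using has_integral_linear[OF int0 bounded_linear_Im] by (simp add: o_def D0eq)
  define Yv where "Yv = integral I ny"
  define D where "D = integral I nd"
  define Rq where "Rq = integral I (\<lambda>x. ny x * q x)"
  define W where "W = integral I (\<lambda>x. ny x * w x)"
  have "integral I (\<lambda>x. - Im c * (ny x * w x)) = - Im c * W"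
    unfolding W_def by simp
  then have "- Im c * W = 0" using int0im integral_unique by metis
  then have W0: "W = 0" using assms(7) c_def by simp
  have "integral I (\<lambda>x. nd x + ny x * q x - Re c * (ny x * w x)) = D + Rq - Re c * W"
    unfolding D_def Rq_def W_def
    using absint_int[OF ai_nd] absint_int[OF ai_nyq] absint_int[OF ai_nyw]
    by (rule integral_lin3)
  moreover have "integral I (\<lambda>x. nd x + ny x * q x - Re c * (ny x * w x)) = 0"
    using int0re by (rule integral_unique)
  ultimately have h1: "Rq + D = 0" using W0 by simp
  define Y2 where "Y2 x = complex_of_real x * Y0 x" for x
  define D2 where "D2 x = complex_of_real x * D0 x + 1 * Y0 x" for x
  have ac2: "abs_cont_on (-1) 1 Y2" unfolding Y2_def by (rule ac_mult[OF ac_id ac0])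
  have d2: "(Y2 has_vector_derivative D2 x) (at x within {-1..1})" if "x \<in> {-1..1} - N" for x
  proof -
    have "((\<lambda>x. complex_of_real x) has_vector_derivative 1) (at x within {-1..1})"
      using has_vector_derivative_of_real[OF DERIV_ident, of "at x within {-1..1}"] by simp
    then show ?thesis unfolding Y2_def D2_def
      using has_vector_derivative_mult[OF _ d0[OF that]] by blast
  qed
  have int2: "(D2 has_integral 0) I"
    using ac_ftc_spike[of "-1" 1 Y2 N D2, OF _ ac2 N d2] ym1 yp1 by (simp add: Y2_def Y0_def I_def)
  define xnd where "xnd x = x * nd x" for x
  define xnq where "xnq x = (x * ny x) * q x" for x
  define xnw where "xnw x = (x * ny x) * w x" for x
  define rY where "rY x = Re (Y0 x)" for x
  define iY where "iY x = Im (Y0 x)" for x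
  have D2re: "Re (D2 x) = xnd x + xnq x - Re c * xnw x + rY x" for x
    unfolding D2_def xnd_def xnq_def xnw_def rY_def D0eq by (simp add: algebra_simps)
  have D2im: "Im (D2 x) = - Im c * xnw x + iY x" for x
    unfolding D2_def xnd_def xnq_def xnw_def iY_def D0eq by (simp add: algebra_simps)
  have int2re: "((\<lambda>x. xnd x + xnq x - Re c * xnw x + rY x) has_integral 0) I"
    using has_integral_linear[OF int2 bounded_linear_Re] by (simp add: o_def D2re)
  have int2im: "((\<lambda>x. - Im c * xnw x + iY x) has_integral 0) I"
    using has_integral_linear[OF int2 bounded_linear_Im] by (simp add: o_def D2im)
  have cY0: "continuous_on I Y0" unfolding Y0_def by (intro continuous_intros cy cy1)
  have cxny: "continuous_on I (\<lambda>x. x * ny x)" by (intro continuous_intros cny)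
  have ai_xnd: "xnd absolutely_integrable_on I" unfolding xnd_def Iab
    by (rule absint_cont) (intro continuous_intros cnd[unfolded Iab])
  have ai_xnq: "xnq absolutely_integrable_on I" unfolding xnq_def using absint_cont_mult[OF cxny[unfolded Iab] qI[unfolded Iab]] Iab by simp
  have ai_xnw: "xnw absolutely_integrable_on I" unfolding xnw_def using absint_cont_mult[OF cxny[unfolded Iab] wI[unfolded Iab]] Iab by simp
  have ai_rY: "rY absolutely_integrable_on I" unfolding rY_def Iab
    by (rule absint_cont) (intro continuous_intros cY0[unfolded Iab])
  have ai_iY: "iY absolutely_integrable_on I" unfolding iY_def Iab
    by (rule absint_cont) (intro continuous_intros cY0[unfolded Iab])
  define Xd where "Xd = integral I xnd"
  define Xq where "Xq = integral I xnq"
  define A where "A = integral I xnw"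
  define Cr where "Cr = integral I rY"
  define Ci where "Ci = integral I iY"
  have "integral I (\<lambda>x. xnd x + xnq x - Re c * xnw x + rY x) = Xd + Xq - Re c * A + Cr"
    unfolding Xd_def Xq_def A_def Cr_def
    using absint_int[OF ai_xnd] absint_int[OF ai_xnq] absint_int[OF ai_xnw] absint_int[OF ai_rY]
    by (rule integral_lin4)
  moreover have "integral I (\<lambda>x. xnd x + xnq x - Re c * xnw x + rY x) = 0"
    using int2re by (rule integral_unique)
  ultimately have h2: "Cr + Xq + Xd - Re c * A = 0" by simp
  have "integral I (\<lambda>x. - Im c * xnw x + iY x) = - Im c * A + Ci"
    unfolding A_def Ci_def
    using absint_int[OF ai_xnw] absint_int[OF ai_iY]
    by (rule integral_lin2)
  moreover have "integral I (\<lambda>x. - Im c * xnw x + iY x) = 0"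
    using int2im by (rule integral_unique)
  ultimately have h3: "Ci - Im c * A = 0" by simp
  define fyy where "fyy x = cmod (y1 x) * cmod (y x)" for x
  have cfyy: "continuous_on I fyy" unfolding fyy_def by (intro continuous_intros cy cy1)
  have rYle: "\<bar>rY x\<bar> \<le> fyy x" for x
  proof -
    have "\<bar>rY x\<bar> \<le> cmod (Y0 x)" unfolding rY_def by (rule abs_Re_le_cmod)
    also have "\<dots> = fyy x" unfolding Y0_def fyy_def by (simp add: norm_mult)
    finally show ?thesis .
  qed
  have iYle: "\<bar>iY x\<bar> \<le> fyy x" for x
  proof -
    have "\<bar>iY x\<bar> \<le> cmod (Y0 x)" unfolding iY_def by (rule abs_Im_le_cmod)
    also have "\<dots> = fyy x" unfolding Y0_def fyy_def by (simp add: norm_mult)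
    finally show ?thesis .
  qed
  define P where "P = integral I fyy"
  define Y3 where "Y3 x = y x * cnj (y x)" for x
  define D3 where "D3 x = y x * cnj (y1 x) + y1 x * cnj (y x)" for x
  have ac3: "abs_cont_on (-1) 1 Y3" unfolding Y3_def by (rule ac_mult[OF ac_y ac_cnj[OF ac_y]])
  have d3: "(Y3 has_vector_derivative D3 x) (at x within I)" if "x \<in> I - N" for x
    unfolding Y3_def D3_def using has_vector_derivative_mult[OF dY[OF that] has_vector_derivative_cnj[OF dY[OF that]]] .
  have ReD3: "Re (D3 x) = 2 * rY x" for x unfolding D3_def rY_def Y0_def by simp
  have Y3eq: "Y3 x = of_real (ny x)" for x unfolding Y3_def ny_def by (simp only: complex_norm_square)
  have ny01: "ny (-1) = 0" "ny 1 = 0" using ym1 yp1 by (simp_all add: ny_def)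
  have Mbound: "ny z \<le> P" if zI: "z \<in> I" for z
  proof -
    have z: "-1 \<le> z" "z \<le> 1" using zI I_def by auto
    have L: "(D3 has_integral (Y3 z - Y3 (-1))) {-1..z}"
    proof (rule ac_ftc_spike[OF z(1) ac_sub[OF ac3] N])
      show "-1 \<le> (-1::real)" by simp
      show "z \<le> 1" by fact
      fix x assume "x \<in> {-1..z} - N"
      then have "x \<in> I - N" and sub: "{-1..z} \<subseteq> I" using z I_def by auto
      then show "(Y3 has_vector_derivative D3 x) (at x within {-1..z})"
        using has_vector_derivative_within_subset[OF d3 sub] by blast
    qed
    have R: "(D3 has_integral (Y3 1 - Y3 z)) {z..1}"
    proof (rule ac_ftc_spike[OF z(2) ac_sub[OF ac3] N])
      show "-1 \<le> z" by fact
      show "1 \<le> (1::real)" by simp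
      fix x assume "x \<in> {z..1} - N"
      then have "x \<in> I - N" and sub: "{z..1} \<subseteq> I" using z I_def by auto
      then show "(Y3 has_vector_derivative D3 x) (at x within {z..1})"
        using has_vector_derivative_within_subset[OF d3 sub] by blast
    qed
    have L': "((\<lambda>x. 2 * rY x) has_integral ny z) {-1..z}"
      using has_integral_linear[OF L bounded_linear_Re] ny01 by (simp add: o_def ReD3 Y3eq)
    have R': "((\<lambda>x. 2 * rY x) has_integral - ny z) {z..1}"
      using has_integral_linear[OF R bounded_linear_Re] ny01 by (simp add: o_def ReD3 Y3eq)
    have c2: "continuous_on I (\<lambda>x. 2 * fyy x)" by (intro continuous_intros cfyy)
    have iL: "(\<lambda>x. 2 * fyy x) integrable_on {-1..z}"
      by (rule integrable_continuous_real, rule continuous_on_subset[OF c2]) (use z I_def in auto)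
    have iR: "(\<lambda>x. 2 * fyy x) integrable_on {z..1}"
      by (rule integrable_continuous_real, rule continuous_on_subset[OF c2]) (use z I_def in auto)
    have iI: "(\<lambda>x. 2 * fyy x) integrable_on {-1..1}"
      using integrable_continuous_real c2 I_def by blast
    have "ny z = integral {-1..z} (\<lambda>x. 2 * rY x)" by (rule sym[OF integral_unique[OF L']])
    also have "\<dots> \<le> integral {-1..z} (\<lambda>x. 2 * fyy x)"
      using L' iL rYle by (intro integral_le) (auto simp: abs_le_iff)
    finally have a: "ny z \<le> integral {-1..z} (\<lambda>x. 2 * fyy x)" .
    have "- ny z = integral {z..1} (\<lambda>x. 2 * rY x)" by (rule sym[OF integral_unique[OF R']])
    moreover have "integral {z..1} (\<lambda>x. - (2 * fyy x)) \<le> integral {z..1} (\<lambda>x. 2 * rY x)"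
    proof (rule integral_le)
      show "(\<lambda>x. - (2 * fyy x)) integrable_on {z..1}" using iR by (rule integrable_neg)
      show "(\<lambda>x. 2 * rY x) integrable_on {z..1}" using R' by blast
      fix x show "- (2 * fyy x) \<le> 2 * rY x" using rYle[of x] by linarith
    qed
    ultimately have b: "ny z \<le> integral {z..1} (\<lambda>x. 2 * fyy x)" by simp
    have "integral {-1..z} (\<lambda>x. 2 * fyy x) + integral {z..1} (\<lambda>x. 2 * fyy x) = integral {-1..1} (\<lambda>x. 2 * fyy x)"
      using has_integral_combine[OF z integrable_integral[OF iL] integrable_integral[OF iR]]
      by (rule sym[OF integral_unique])
    also have "\<dots> = 2 * P" unfolding P_def I_def by simp
    finally show "ny z \<le> P" using a b by simp
  qed
  have nyge: "ny x \<ge> 0" for x unfolding ny_def by simp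
  have ndge: "nd x \<ge> 0" for x unfolding nd_def by simp
  have P0: "P > 0"
  proof -
    have "0 < ny x0" unfolding ny_def using x0(2) by simp
    then show ?thesis using Mbound[OF x0(1)] by simp
  qed
  have Dnn: "D \<ge> 0" unfolding D_def using absint_int[OF ai_nd] ndge by (intro integral_nonneg) auto
  have Ynn: "Yv \<ge> 0" unfolding Yv_def using absint_int[OF ai_ny] nyge by (intro integral_nonneg) auto
  define nq where "nq = neg_part q"
  have nqeq: "nq = (\<lambda>x. (\<bar>q x\<bar> - q x) / 2)" by (auto simp: nq_def neg_part_def fun_eq_iff min_def)
  have nqge: "nq x \<ge> 0" for x unfolding nq_def neg_part_def by simp
  have nqq: "- q x \<le> nq x" for x unfolding nq_def neg_part_def by simp
  have absq: "\<bar>q x\<bar> = q x + 2 * nq x" for x unfolding nq_def neg_part_def by (simp add: abs_if min_def)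
  have ai_nq: "nq absolutely_integrable_on I"
    unfolding nqeq using set_integral_diff(1)[OF set_integrable_abs[OF qI] qI] by (rule set_integrable_divide)
  have ai_nynq: "(\<lambda>x. ny x * nq x) absolutely_integrable_on I"
    using absint_cont_mult[OF cny[unfolded Iab] ai_nq[unfolded Iab]] Iab by simp
  define Qn where "Qn = integral I (\<lambda>x. ny x * nq x)"
  define Qh where "Qh = integral I nq"
  have Q0: "Qh \<ge> 0" unfolding Qh_def using absint_int[OF ai_nq] nqge by (intro integral_nonneg) auto
  have hRq: "- Rq \<le> Qn"
  proof -
    have "- Rq = integral I (\<lambda>x. - (ny x * q x))" unfolding Rq_def by simp
    also have "\<dots> \<le> Qn" unfolding Qn_def
    proof (rule integral_le)
      show "(\<lambda>x. - (ny x * q x)) integrable_on I" using absint_int[OF ai_nyq] by (rule integrable_neg)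
      show "(\<lambda>x. ny x * nq x) integrable_on I" using absint_int[OF ai_nynq] .
      fix x show "- (ny x * q x) \<le> ny x * nq x"
        using mult_left_mono[OF nqq[of x] nyge[of x]] by simp
    qed
    finally show ?thesis .
  qed
  have hQn: "Qn \<le> Qh * P"
  proof -
    have "Qn \<le> integral I (\<lambda>x. P * nq x)" unfolding Qn_def
    proof (rule integral_le)
      show "(\<lambda>x. ny x * nq x) integrable_on I" using absint_int[OF ai_nynq] .
      show "(\<lambda>x. P * nq x) integrable_on I" using integrable_cmul[OF absint_int[OF ai_nq], of P] by simp
      fix x assume "x \<in> I"
      then show "ny x * nq x \<le> P * nq x" using mult_right_mono[OF Mbound nqge] by simp
    qed
    also have "\<dots> = P * Qh" unfolding Qh_def using integral_mult[OF absint_int[OF ai_nq], of P] by simp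
    finally show ?thesis by (simp add: mult.commute)
  qed
  have hXq: "\<bar>Xq\<bar> \<le> Rq + 2 * Qn"
  proof -
    have gi: "(\<lambda>x. ny x * q x + 2 * (ny x * nq x)) integrable_on I"
      using integrable_add[OF absint_int[OF ai_nyq] integrable_cmul[OF absint_int[OF ai_nynq], of 2]] by simp
    have "\<bar>Xq\<bar> \<le> integral I (\<lambda>x. ny x * q x + 2 * (ny x * nq x))" unfolding Xq_def
    proof (rule integral_abs_le[OF absint_int[OF ai_xnq] gi])
      fix x assume "x \<in> I"
      then have ax: "\<bar>x\<bar> \<le> 1" using I_def by auto
      have "\<bar>xnq x\<bar> = \<bar>x\<bar> * (ny x * \<bar>q x\<bar>)" unfolding xnq_def using nyge[of x] by (simp add: abs_mult)
      also have "\<dots> \<le> ny x * \<bar>q x\<bar>" using ax nyge[of x] by (intro mult_left_le_one_le) auto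
      also have "\<dots> = ny x * q x + 2 * (ny x * nq x)" by (simp add: absq algebra_simps)
      finally show "\<bar>xnq x\<bar> \<le> ny x * q x + 2 * (ny x * nq x)" .
    qed
    also have "\<dots> = Rq + 2 * Qn" unfolding Rq_def Qn_def
      using integral_add[OF absint_int[OF ai_nyq] integrable_cmul[OF absint_int[OF ai_nynq], of 2]]
      by simp
    finally show ?thesis .
  qed
  have hXd: "\<bar>Xd\<bar> \<le> D" unfolding Xd_def D_def
  proof (rule integral_abs_le[OF absint_int[OF ai_xnd] absint_int[OF ai_nd]])
    fix x assume "x \<in> I"
    then have ax: "\<bar>x\<bar> \<le> 1" using I_def by auto
    have "\<bar>xnd x\<bar> = \<bar>x\<bar> * nd x" unfolding xnd_def using ndge[of x] by (simp add: abs_mult)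
    also have "\<dots> \<le> nd x" using ax ndge[of x] by (intro mult_left_le_one_le) auto
    finally show "\<bar>xnd x\<bar> \<le> nd x" .
  qed
  have ifyy: "fyy integrable_on I" using integrable_continuous_real cfyy I_def by blast
  have hCr: "\<bar>Cr\<bar> \<le> P" unfolding Cr_def P_def
    using integral_abs_le[OF absint_int[OF ai_rY] ifyy] rYle by blast
  have hCi: "\<bar>Ci\<bar> \<le> P" unfolding Ci_def P_def
    using integral_abs_le[OF absint_int[OF ai_iY] ifyy] iYle by blast
  have amgm: "P \<le> (t*D + Yv/t)/2" if t: "t > 0" for t
  proof -
    have "P \<le> integral I (\<lambda>x. (t/2) * nd x + (1/(2*t)) * ny x)" unfolding P_def
    proof (rule integral_le[OF ifyy])
      show "(\<lambda>x. (t/2) * nd x + (1/(2*t)) * ny x) integrable_on I"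
        using integrable_add[OF integrable_cmul[OF absint_int[OF ai_nd], of "t/2"] integrable_cmul[OF absint_int[OF ai_ny], of "1/(2*t)"]]
        by simp
      fix x
      define a where "a = cmod (y1 x)"
      define b where "b = cmod (y x)"
      have "0 \<le> (t*a - b)^2" by simp
      then have "2*t*(a*b) \<le> t*(t*a^2) + b^2" by (simp add: power2_eq_square algebra_simps)
      then have "2*t*(a*b) / (2*t) \<le> (t*(t*a^2) + b^2) / (2*t)" using t by (intro divide_right_mono) auto
      also have "(t*(t*a^2) + b^2) / (2*t) = (t/2) * a^2 + (1/(2*t)) * b^2" using t by (simp add: field_simps power2_eq_square)
      finally show "fyy x \<le> (t/2) * nd x + (1/(2*t)) * ny x" using t unfolding fyy_def nd_def ny_def a_def b_def by simp
    qed
    also have "\<dots> = (t/2) * D + (1/(2*t)) * Yv" unfolding D_def Yv_def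
      using integral_add[OF integrable_cmul[OF absint_int[OF ai_nd], of "t/2"] integrable_cmul[OF absint_int[OF ai_ny], of "1/(2*t)"]]
      by simp
    also have "\<dots> = (t*D + Yv/t)/2" by (simp add: field_simps)
    finally show ?thesis .
  qed
  define S where "S = S1 w \<epsilon>1"
  define m where "m = m1 w \<epsilon>1"
  have wm[measurable]: "(\<lambda>x. indicator I x *\<^sub>R w x) \<in> borel_measurable lebesgue"
    using wI unfolding set_integrable_def by (rule borel_measurable_integrable)
  have Seq: "S = I \<inter> {x. x * (indicator I x *\<^sub>R w x) < \<epsilon>1}"
    by (auto simp: S_def S1_def I_def indicator_def)
  have Isets: "I \<in> sets lebesgue" unfolding I_def by simp
  have idm: "(\<lambda>x::real. x) \<in> borel_measurable lebesgue"
    by (rule measurable_completion[OF measurable_ident_sets[OF sets_lborel]])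
  have fm: "(\<lambda>x. x * (indicator I x *\<^sub>R w x)) \<in> borel_measurable lebesgue"
    using idm wm by (rule borel_measurable_times)
  have "{x \<in> space lebesgue. x * (indicator I x *\<^sub>R w x) < \<epsilon>1} \<in> sets lebesgue"
    using fm by (rule borel_measurable_less) simp
  then have "{x. x * (indicator I x *\<^sub>R w x) < \<epsilon>1} \<in> sets lebesgue" by simp
  then have Ssets: "S \<in> sets lebesgue" unfolding Seq using Isets by blast
  have SI: "S \<subseteq> I" by (auto simp: S_def S1_def I_def)
  have Slm: "S \<in> lmeasurable"
    by (rule bounded_set_imp_lmeasurable[OF bounded_subset[OF _ SI] Ssets]) (simp add: I_def)
  have SIeq: "S \<inter> I = S" using SI by auto
  have ind_int: "indicat_real S integrable_on I" using Slm SIeq by (simp add: integrable_on_indicator)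
  have m_int: "integral I (indicat_real S) = m"
    using integral_indicator[of S I] Slm SIeq by (simp add: m_def m1_def S_def)
  have m0: "m \<ge> 0" unfolding m_def m1_def by simp
  have m2: "m \<le> 2"
  proof -
    have "m \<le> measure lebesgue I" unfolding m_def m1_def
      using SI Isets Ssets[unfolded S_def] by (intro measure_mono_fmeasurable) (auto simp: S_def I_def)
    then show ?thesis by (simp add: I_def)
  qed
  define lhs where "lhs x = \<epsilon>1 * ny x - \<epsilon>1 * P * indicat_real S x" for x
  define h where "h x = (if x \<in> N then lhs x else xnw x)" for x
  have hA: "A \<ge> \<epsilon>1 * Yv - \<epsilon>1 * P * m"
  proof -
    have hxn: "integral I h = A" unfolding A_def
      by (rule integral_spike[OF N]) (simp add: h_def)
    have hint: "h integrable_on I"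
      by (rule integrable_spike[OF absint_int[OF ai_xnw] N]) (simp add: h_def)
    have lint: "lhs integrable_on I" unfolding lhs_def
      using integrable_diff[OF integrable_cmul[OF absint_int[OF ai_ny], of \<epsilon>1] integrable_cmul[OF ind_int, of "\<epsilon>1 * P"]]
      by simp
    have "integral I lhs = \<epsilon>1 * Yv - \<epsilon>1 * P * m" unfolding lhs_def Yv_def
      using integral_diff[OF integrable_cmul[OF absint_int[OF ai_ny], of \<epsilon>1] integrable_cmul[OF ind_int, of "\<epsilon>1 * P"]] m_int
      by simp
    moreover have "integral I lhs \<le> integral I h"
    proof (rule integral_le[OF lint hint])
      fix x assume xI: "x \<in> I"
      show "lhs x \<le> h x"
      proof (cases "x \<in> N")
        case True then show ?thesis by (simp add: h_def)
      next
        case False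
        then have xw': "x * w x > 0" using xw xI by blast
        have xnw_eq: "xnw x = (x * w x) * ny x" unfolding xnw_def by (simp add: algebra_simps)
        show ?thesis
        proof (cases "x \<in> S")
          case True
          have "\<epsilon>1 * ny x \<le> \<epsilon>1 * P" using Mbound[OF xI] assms(5) by simp
          moreover have "xnw x \<ge> 0" unfolding xnw_eq using xw' nyge[of x] by simp
          ultimately show ?thesis using True False by (simp add: h_def lhs_def)
        next
          case nS: False
          then have "x * w x \<ge> \<epsilon>1" using xI by (auto simp: S_def S1_def I_def)
          then have "\<epsilon>1 * ny x \<le> (x * w x) * ny x" using nyge[of x] by (intro mult_right_mono) auto
          then show ?thesis using nS False by (simp add: h_def lhs_def xnw_eq)
        qed
      qed
    qed
    ultimately show ?thesis using hxn by simp
  qed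
  have L1: "L1norm (neg_part q) = Qh"
  proof -
    have "L1norm (neg_part q) = (LINT x:I|lebesgue. nq x)"
      unfolding L1norm_def I_def using nqge by (simp add: nq_def)
    also have "\<dots> = Qh" unfolding Qh_def by (rule set_lebesgue_integral_eq_integral(2)[OF ai_nq])
    finally show ?thesis .
  qed
  have hm: "8 * Qh^2 * m < 1" using assms(6) L1 m_def by simp
  have fin: "\<bar>Re c\<bar> \<le> 4/\<epsilon>1 * (Qh + 4*Qh^2) \<and> \<bar>Im c\<bar> \<le> 4/\<epsilon>1 * Qh"
    by (rule final_arith[OF h1 h2 h3 P0 Dnn hRq hQn Q0 hXq hXd hCr hCi amgm Ynn hA assms(5) m0 m2 hm])
  show ?thesis using fin L1 c_def by simp
qed

end
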